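(* As $\ell\to0$, $\frac{F(\omega_1(\ell))+F(\omega_{-1}(\ell))}{2}=F(\kappa)$, $\frac{F(\omega_1(\ell))-F(\omega_{-1}(\ell))}{2}=\Big(F'(\kappa)+(\kappa F''(\kappa)-F'(\kappa))\frac{\ell^2}{2\kappa^2}\Big)\xi_+(\ell)+\frac16F'''(\kappa)\,\xi_+(\ell)^3+O(\ell^5)$, and $\xi_+(\ell)=\ell\sqrt{-\frac{F'(\kappa)}{\kappa F''(\kappa)}}\Big(1+\frac{\ell^2}{2\kappa^2}\Big(\frac34-\frac{F'(\kappa)}{\kappa F''(\kappa)}+\frac\kappa4\Big(\frac{F''(\kappa)}{F'(\kappa)}-2\frac{F'''(\kappa)}{F''(\kappa)}\Big)+\frac{\kappa}{12}\frac{F''''(\kappa)F'(\kappa)}{F''(\kappa)^2}\Big)\Big)+O(\ell^5)$.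
   Context: Fix $\kappa>0$ and set $\mu_0:=\kappa/\tanh(\kappa)$. Let $F:\mathbb R\to\mathbb R$ be the odd analytic function with $F(r)=\sqrt{r\tanh r}$ for $r\ge0$ (one has $F'>0$ and $F''(\kappa)<0$). For $n\in\mathbb Z$, $(\ell,\xi)\in\mathbb R^2$ set $|n\kappa|_{\ell,\xi}:=\sqrt{(n\kappa+\xi)^2+\ell^2}$ and $\lambda^\pm_{n,\ell,\xi}:=i(n\kappa+\xi\pm\sqrt{\mu_0}F(|n\kappa|_{\ell,\xi}))$. Let $\xi_+$ be the odd analytic function defined near $0$ with $\xi_+'(0)>0$ such that $\lambda^-_{1,\ell,\xi_+(\ell)}=\lambda^+_{-1,\ell,\xi_+(\ell)}$ for all small $\ell$, and set $\omega_j(\ell):=\sqrt{(j\kappa+\xi_+(\ell))^2+\ell^2}$ for $j\in\mathbb Z$. *)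

theory Defs
  imports "HOL-Analysis.Analysis" "HOL-Library.Landau_Symbols"
begin

definition Fw :: "real \<Rightarrow> real" where
  "Fw r = sgn r * sqrt (r * tanh r)"

definition Fd :: "nat \<Rightarrow> real \<Rightarrow> real" where
  "Fd k = (deriv ^^ k) Fw"

definition mu0 :: "real \<Rightarrow> real" where
  "mu0 \<kappa> = \<kappa> / tanh \<kappa>"

definition absn :: "real \<Rightarrow> int \<Rightarrow> real \<Rightarrow> real \<Rightarrow> real" where
  "absn \<kappa> n l \<xi> = sqrt ((of_int n * \<kappa> + \<xi>)^2 + l^2)"

definition lam_plus :: "real \<Rightarrow> int \<Rightarrow> real \<Rightarrow> real \<Rightarrow> complex" where
  "lam_plus \<kappa> n l \<xi> = \<i> * complex_of_real (of_int n * \<kappa> + \<xi> + sqrt (mu0 \<kappa>) * Fw (absn \<kappa> n l \<xi>))"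

definition lam_minus :: "real \<Rightarrow> int \<Rightarrow> real \<Rightarrow> real \<Rightarrow> complex" where
  "lam_minus \<kappa> n l \<xi> = \<i> * complex_of_real (of_int n * \<kappa> + \<xi> - sqrt (mu0 \<kappa>) * Fw (absn \<kappa> n l \<xi>))"

definition real_analytic_on :: "(real \<Rightarrow> real) \<Rightarrow> real set \<Rightarrow> bool" where
  "real_analytic_on f S \<longleftrightarrow> (\<forall>x\<in>S. \<exists>r>0. \<exists>c::nat \<Rightarrow> real.
      \<forall>y. \<bar>y - x\<bar> < r \<longrightarrow> (\<lambda>n. c n * (y - x)^n) sums f y)"

definition omega :: "real \<Rightarrow> (real \<Rightarrow> real) \<Rightarrow> int \<Rightarrow> real \<Rightarrow> real" where
  "omega \<kappa> xi j l = sqrt ((of_int j * \<kappa> + xi l)^2 + l^2)"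

end

theory Submission
  imports Defs "HOL-Complex_Analysis.Complex_Analysis"
begin

lemma expm_of_real': "exp (- complex_of_real x) = of_real (exp (-x))"
  by (metis exp_of_real of_real_minus)
lemma cosh_of_real': "cosh (complex_of_real x) = of_real (cosh x)"
  by (simp add: cosh_def exp_of_real expm_of_real' scaleR_conv_of_real)
lemma sinh_of_real': "sinh (complex_of_real x) = of_real (sinh x)"
  by (simp add: sinh_def exp_of_real expm_of_real' scaleR_conv_of_real)
lemma tanh_of_real': "tanh (complex_of_real x) = of_real (tanh x)"
  by (simp add: tanh_def cosh_of_real' sinh_of_real')

definition Gc :: "complex \<Rightarrow> complex" where "Gc z = csqrt (z * tanh z)"
definition SS :: "complex set" where "SS = {z. cosh z \<noteq> 0} \<inter> (\<lambda>z. z * tanh z) -` (- \<real>\<^sub>\<le>\<^sub>0)"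

lemma open_SS: "open SS"
proof -
  have "open {z::complex. cosh z \<noteq> 0}"
    by (intro open_Collect_neq continuous_intros) 
  moreover have "continuous_on {z::complex. cosh z \<noteq> 0} (\<lambda>z. z * tanh z)"
    unfolding tanh_def by (intro continuous_intros) auto
  ultimately show ?thesis unfolding SS_def
    by (intro continuous_open_preimage) auto
qed

lemma hol_Gc: "Gc holomorphic_on SS"
  apply (subst holomorphic_on_open[OF open_SS])
  unfolding Gc_def SS_def
  by (auto intro!: derivative_eq_intros)

lemma real_in_SS: assumes "x > 0" shows "complex_of_real x \<in> SS"
proof -
  have "x * tanh x > 0" using assms by simp
  then show ?thesis
  unfolding SS_def by (auto simp: cosh_of_real' tanh_of_real' complex_nonpos_Reals_iff 
      simp flip: of_real_mult)
qed

lemma R_deriv: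
  assumes "x > 0"
  shows "((\<lambda>t. Re ((deriv^^n) Gc (of_real t))) has_real_derivative Re ((deriv^^Suc n) Gc (of_real x))) (at x)"
proof -
  have h: "((deriv^^n) Gc has_field_derivative (deriv^^Suc n) Gc (of_real x)) (at (of_real x))"
    using holomorphic_derivI[OF holomorphic_higher_deriv[OF hol_Gc open_SS] open_SS real_in_SS[OF assms]]
    by simp
  show ?thesis
    by (rule has_field_derivative_Re) (rule has_vector_derivative_real_field[OF h])
qed

lemma Fd_Re: "x > 0 \<Longrightarrow> Fd n x = Re ((deriv^^n) Gc (of_real x))"
proof (induction n arbitrary: x)
  case 0
  have "x * tanh x \<ge> 0" using 0 by simp
  then show ?case using 0 
    by (simp add: Fd_def Fw_def Gc_def tanh_of_real' flip: of_real_mult)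
next
  case (Suc n)
  have "((\<lambda>t. Re ((deriv^^n) Gc (of_real t))) has_real_derivative Re ((deriv^^Suc n) Gc (of_real x))) (at x)"
    by (rule R_deriv[OF Suc.prems])
  then have "(Fd n has_real_derivative Re ((deriv^^Suc n) Gc (of_real x))) (at x)"
    by (rule has_field_derivative_transform_within_open[where S="{0<..}"])
       (use Suc in auto)
  then have "deriv (Fd n) x = Re ((deriv^^Suc n) Gc (of_real x))"
    by (rule DERIV_imp_deriv)
  then show ?case by (simp add: Fd_def)
qed

lemma Fd_DERIV: "x > 0 \<Longrightarrow> (Fd n has_real_derivative Fd (Suc n) x) (at x)"
proof -
  assume x: "x > 0"
  have "((\<lambda>t. Re ((deriv^^n) Gc (of_real t))) has_real_derivative Re ((deriv^^Suc n) Gc (of_real x))) (at x)"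
    by (rule R_deriv[OF x])
  then have "(Fd n has_real_derivative Re ((deriv^^Suc n) Gc (of_real x))) (at x)"
    by (rule has_field_derivative_transform_within_open[where S="{0<..}"])
       (use x Fd_Re in auto)
  then show ?thesis using Fd_Re[OF x, of "Suc n"] by simp
qed

lemma Fd0: "Fd 0 = Fw" by (simp add: Fd_def)

lemma bigo_mult_conv:
  fixes g B :: "'a \<Rightarrow> real"
  assumes "(B \<longlongrightarrow> c) F"
  shows "(\<lambda>x. g x * B x) \<in> O[F](g)"
proof -
  have "B \<in> O[F](\<lambda>_. 1)"
    by (rule bigoI_tendsto[where c=c]) (use assms in auto)
  from landau_o.big_mult[OF landau_o.big_refl this] show ?thesis by simp
qed

lemma bigo_at_to_nhds:
  fixes f g :: "real \<Rightarrow> real"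
  assumes "f \<in> O[at a](g)" "f a = 0"
  shows "f \<in> O[nhds a](g)"
proof -
  from assms(1) obtain c where c: "c > 0" "eventually (\<lambda>x. norm (f x) \<le> c * norm (g x)) (at a)"
    by (elim landau_o.bigE)
  then have "eventually (\<lambda>x. x \<noteq> a \<longrightarrow> norm (f x) \<le> c * norm (g x)) (nhds a)"
    by (simp add: eventually_at_filter)
  then have "eventually (\<lambda>x. norm (f x) \<le> c * norm (g x)) (nhds a)"
    by eventually_elim (use assms(2) c in auto)
  then show ?thesis by (rule bigoI)
qed

lemma bigo_pow_mono:
  assumes "n \<le> k"
  shows "(\<lambda>l. l^k) \<in> O[at (0::real)](\<lambda>l. l^n)"
proof -
  have "(\<lambda>l. l^n * l^(k-n)) \<in> O[at (0::real)](\<lambda>l. l^n)"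
    by (rule bigo_mult_conv[where c="0^(k-n)"]) (intro tendsto_intros)
  moreover have "(\<lambda>l::real. l^n * l^(k-n)) = (\<lambda>l. l^k)"
    using assms by (auto simp: fun_eq_iff simp flip: power_add)
  ultimately show ?thesis by simp
qed

lemma bigo_div_pow:
  fixes f :: "real \<Rightarrow> real"
  assumes "(\<lambda>l. l^k * f l) \<in> O[at 0](\<lambda>l. l^(k+n))"
  shows "f \<in> O[at 0](\<lambda>l. l^n)"
proof -
  from assms obtain c where c: "c > 0" "eventually (\<lambda>x. norm (x^k * f x) \<le> c * norm (x^(k+n))) (at 0)"
    by (elim landau_o.bigE)
  have "eventually (\<lambda>x::real. x \<noteq> 0) (at 0)" by (simp add: eventually_at_filter)
  with c(2) have "eventually (\<lambda>x. norm (f x) \<le> c * norm (x^n)) (at 0)"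
  proof eventually_elim
    case (elim x)
    then have "\<bar>x\<bar>^k * \<bar>f x\<bar> \<le> \<bar>x\<bar>^k * (c * \<bar>x\<bar>^n)"
      by (simp add: abs_mult power_abs power_add mult_ac)
    moreover have "\<bar>x\<bar>^k > 0" using elim by simp
    ultimately show ?case by (simp add: power_abs)
  qed
  then show ?thesis by (rule bigoI)
qed

lemma bigo_tendsto0:
  fixes f :: "real \<Rightarrow> real"
  assumes "f \<in> O[at 0](\<lambda>l. l^n)" "n > 0"
  shows "(f \<longlongrightarrow> 0) (at 0)"
proof -
  from assms obtain c where c: "c > 0" "eventually (\<lambda>x. norm (f x) \<le> c * norm (x^n)) (at 0)"
    by (elim landau_o.bigE)
  show ?thesis
  proof (rule Lim_null_comparison[OF c(2)])
    have "((\<lambda>x::real. c * norm (x^n)) \<longlongrightarrow> c * norm ((0::real)^n)) (at 0)"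
      by (intro tendsto_intros)
    then show "((\<lambda>x::real. c * norm (x^n)) \<longlongrightarrow> 0) (at 0)" using assms(2) by (simp add: power_0_left)
  qed
qed

lemma bigo_pow_diff:
  fixes a b :: "'a \<Rightarrow> real"
  assumes "(\<lambda>x. a x - b x) \<in> O[F](h)" "a \<in> O[F](\<lambda>_. 1)" "b \<in> O[F](\<lambda>_. 1)"
  shows "(\<lambda>x. a x ^ m - b x ^ m) \<in> O[F](h)"
proof (induction m)
  case 0
  then show ?case by simp
next
  case (Suc m)
  have 1: "(\<lambda>x. a x * (a x ^ m - b x ^ m)) \<in> O[F](h)"
    using landau_o.big_mult[OF assms(2) Suc] by simp
  have bm: "(\<lambda>x. b x ^ m) \<in> O[F](\<lambda>_. 1)"
    using landau_o.big_power[OF assms(3), of m] by simp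
  have 2: "(\<lambda>x. b x ^ m * (a x - b x)) \<in> O[F](h)"
    using landau_o.big_mult[OF bm assms(1)] by simp
  have "(\<lambda>x. a x * (a x ^ m - b x ^ m) + b x ^ m * (a x - b x)) \<in> O[F](h)"
    by (rule sum_in_bigo(1)[OF 1 2])
  moreover have "(\<lambda>x. a x * (a x ^ m - b x ^ m) + b x ^ m * (a x - b x)) = (\<lambda>x. a x ^ Suc m - b x ^ Suc m)"
    by (auto simp: fun_eq_iff algebra_simps)
  ultimately show ?case by simp
qed

lemma Fw_taylor:
  assumes k: "\<kappa> > 0"
  shows "(\<lambda>u. Fw (\<kappa> + u) - (\<Sum>m<6. Fd m \<kappa> / fact m * u^m)) \<in> O[nhds 0](\<lambda>u. u^6)"
proof -
  have cont: "continuous_on {\<kappa>/2..3*\<kappa>/2} (Fd 6)"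
    by (rule continuous_at_imp_continuous_on) (use k in \<open>auto intro!: DERIV_isCont[OF Fd_DERIV]\<close>)
  have "bounded (Fd 6 ` {\<kappa>/2..3*\<kappa>/2})"
    by (rule compact_imp_bounded[OF compact_continuous_image[OF cont compact_Icc]])
  then obtain M where M0: "\<forall>t\<in>{\<kappa>/2..3*\<kappa>/2}. \<bar>Fd 6 t\<bar> \<le> M"
    unfolding bounded_iff by auto
  have M: "\<bar>Fd 6 t\<bar> \<le> M" if "t \<in> {\<kappa>/2..3*\<kappa>/2}" for t using M0 that by blast
  have ev: "eventually (\<lambda>u. u \<in> {-\<kappa>/2<..<\<kappa>/2}) (nhds (0::real))"
    by (rule eventually_nhds_in_open) (use k in auto)
  have DER: "\<forall>m t. m < 6 \<and> \<kappa>/2 \<le> t \<and> t \<le> 3*\<kappa>/2 \<longrightarrow> DERIV (Fd m) t :> Fd (Suc m) t"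
    using k by (auto intro!: Fd_DERIV)
  have "eventually (\<lambda>u. norm (Fw (\<kappa> + u) - (\<Sum>m<6. Fd m \<kappa> / fact m * u^m)) \<le> (M / fact 6) * norm (u^6)) (nhds 0)"
    using ev
  proof eventually_elim
    case (elim u)
    show ?case
    proof (cases "u = 0")
      case True
      then show ?thesis by (simp add: Fd0 eval_nat_numeral)
    next
      case False
      obtain t where t: "(if \<kappa>+u < \<kappa> then \<kappa>+u < t \<and> t < \<kappa> else \<kappa> < t \<and> t < \<kappa>+u)"
        and eq: "Fw (\<kappa>+u) = (\<Sum>m<6. (Fd m \<kappa> / fact m) * (\<kappa>+u - \<kappa>)^m) + (Fd 6 t / fact 6) * (\<kappa>+u - \<kappa>)^6"
        using Taylor[of 6 Fd Fw "\<kappa>/2" "3*\<kappa>/2" \<kappa> "\<kappa>+u"] DER elim False k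
        by (auto simp: Fd0)
      have tI: "t \<in> {\<kappa>/2..3*\<kappa>/2}" using t elim by (auto split: if_splits)
      have "norm (Fw (\<kappa> + u) - (\<Sum>m<6. Fd m \<kappa> / fact m * u^m)) = \<bar>Fd 6 t\<bar> / fact 6 * \<bar>u^6\<bar>"
        using eq by (simp add: abs_mult)
      also have "\<dots> \<le> M / fact 6 * \<bar>u^6\<bar>"
        using M[OF tI] by (intro mult_right_mono divide_right_mono) auto
      finally show ?thesis by simp
    qed
  qed
  then show ?thesis by (rule bigoI)
qed

definition tau :: "real \<Rightarrow> real" where "tau t = sqrt (1+t) - 1"
definition Qt :: "real \<Rightarrow> real" where
  "Qt t = (1/2)*t^1 + (-1/8)*t^2 + (1/16)*t^3 + (-5/128)*t^4 + (7/256)*t^5"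
definition Rs :: "real \<Rightarrow> real" where
  "Rs t = (21/512) + (-3/256)*t^1 + (81/16384)*t^2 + (-35/16384)*t^3 + (49/65536)*t^4"

lemma Qt_sq: "Qt t ^ 2 + 2 * Qt t - t = t^6 * Rs t"
  unfolding Qt_def Rs_def by algebra

lemma ev_gt_m1: "eventually (\<lambda>t::real. t > -1) (at 0)"
  using order_tendstoD(1)[OF tendsto_ident_at, of "-1::real" 0 UNIV] by simp

lemma tau_tendsto: "(tau \<longlongrightarrow> 0) (at 0)"
proof -
  have "((\<lambda>t. sqrt (1+t) - 1) \<longlongrightarrow> sqrt (1+0) - 1) (at (0::real))"
    by (intro tendsto_intros)
  then show ?thesis by (simp add: tau_def[abs_def])
qed

lemma Qt_tendsto: "(Qt \<longlongrightarrow> 0) (at 0)"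
proof -
  have "(Qt \<longlongrightarrow> Qt 0) (at (0::real))"
    unfolding Qt_def by (intro tendsto_intros)
  then show ?thesis by (simp add: Qt_def)
qed

lemma tau_sq: assumes "t > -1" shows "tau t ^ 2 + 2 * tau t = t"
proof -
  have s: "sqrt (1+t) ^ 2 = 1 + t" using assms by simp
  have "(sqrt (1+t) - 1) ^ 2 + 2 * (sqrt (1+t) - 1) = sqrt (1+t) ^ 2 - 1" by algebra
  then show ?thesis unfolding tau_def using s by simp
qed

lemma tau_Qt: "(\<lambda>t. tau t - Qt t) \<in> O[at 0](\<lambda>t. t^6)"
proof -
  define D where "D t = tau t + Qt t + 2" for t
  have D: "(D \<longlongrightarrow> 0 + 0 + 2) (at 0)" unfolding D_def
    by (intro tendsto_intros tau_tendsto Qt_tendsto)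
  have evD: "eventually (\<lambda>t. D t > 1) (at 0)"
    using order_tendstoD(1)[OF D, of 1] by simp
  have B: "((\<lambda>t. - Rs t / D t) \<longlongrightarrow> - Rs 0 / (0 + 0 + 2)) (at 0)"
    unfolding Rs_def by (intro tendsto_intros D) auto
  have eq: "eventually (\<lambda>t. t^6 * (- Rs t / D t) = tau t - Qt t) (at 0)"
    using evD ev_gt_m1
  proof eventually_elim
    case (elim t)
    have "(tau t - Qt t) * D t = (tau t ^ 2 + 2 * tau t) - (Qt t ^ 2 + 2 * Qt t)"
      unfolding D_def power2_eq_square by algebra
    also have "\<dots> = - (t^6 * Rs t)" using tau_sq[OF elim(2)] Qt_sq[of t] by linarith
    finally have "tau t - Qt t = - (t^6 * Rs t) / D t" using elim(1)
      by (subst nonzero_eq_divide_eq) auto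
    then show ?case by simp
  qed
  have "(\<lambda>t. t^6 * (- Rs t / D t)) \<in> O[at 0](\<lambda>t. t^6)"
    by (rule bigo_mult_conv[OF B])
  then show ?thesis using landau_o.big.in_cong[OF eq] by blast
qed

lemma tau_bigo: "tau \<in> O[at 0](\<lambda>t. t)"
proof -
  have eq: "eventually (\<lambda>t. t * (1 / (sqrt (1+t) + 1)) = tau t) (at 0)"
    using ev_gt_m1
  proof eventually_elim
    case (elim t)
    have "sqrt (1+t) \<ge> 0" using elim by simp
    then have "sqrt (1+t) + 1 > 0" by linarith
    moreover have s: "sqrt (1+t) ^ 2 = 1 + t" using elim by simp
    have "(sqrt (1+t) - 1) * (sqrt (1+t) + 1) = sqrt (1+t) ^ 2 - 1" by algebra
    then have "(sqrt (1+t) - 1) * (sqrt (1+t) + 1) = t" using s by simp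
    ultimately have "tau t = t / (sqrt (1+t) + 1)" unfolding tau_def
      by (subst nonzero_eq_divide_eq) auto
    then show ?case by simp
  qed
  have "(\<lambda>t. t * (1 / (sqrt (1+t) + 1))) \<in> O[at 0](\<lambda>t. t)"
    by (rule bigo_mult_conv[where c="1 / (sqrt (1+0) + 1)"]) (intro tendsto_intros, auto)
  then show ?thesis using landau_o.big.in_cong[OF eq] by blast
qed

definition R2 :: "real \<Rightarrow> real" where "R2 t = (21/512) + (-3/256)*t^1 + (81/16384)*t^2 + (-35/16384)*t^3 + (49/65536)*t^4"
lemma Qt_pow2: "Qt t ^ 2 = ((1/4)*t^2 + (-1/8)*t^3 + (5/64)*t^4 + (-7/128)*t^5) + t^6 * R2 t"
  unfolding Qt_def R2_def by algebra
definition R3 :: "real \<Rightarrow> real" where "R3 t = (-7/128) + (45/1024)*t^1 + (-171/8192)*t^2 + (353/32768)*t^3 + (-723/131072)*t^4 + (663/262144)*t^5 + (-1553/2097152)*t^6 + (1113/4194304)*t^7 + (-735/8388608)*t^8 + (343/16777216)*t^9"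
lemma Qt_pow3: "Qt t ^ 3 = ((1/8)*t^3 + (-3/32)*t^4 + (9/128)*t^5) + t^6 * R3 t"
  unfolding Qt_def R3_def by algebra
definition R4 :: "real \<Rightarrow> real" where "R4 t = (7/128) + (-3/64)*t^1 + (165/4096)*t^2 + (-101/4096)*t^3 + (485/32768)*t^4 + (-565/65536)*t^5 + (2435/524288)*t^6 + (-2121/1048576)*t^7 + (3747/4194304)*t^8 + (-391/1048576)*t^9 + (36465/268435456)*t^10 + (-5187/134217728)*t^11 + (6419/536870912)*t^12 + (-1715/536870912)*t^13 + (2401/4294967296)*t^14"
lemma Qt_pow4: "Qt t ^ 4 = ((1/16)*t^4 + (-1/16)*t^5) + t^6 * R4 t"
  unfolding Qt_def R4_def by algebra
definition R5 :: "real \<Rightarrow> real" where "R5 t = (-5/128) + (5/128)*t^1 + (-75/2048)*t^2 + (275/8192)*t^3 + (-791/32768)*t^4 + (535/32768)*t^5 + (-5535/524288)*t^6 + (1675/262144)*t^7 + (-7095/2097152)*t^8 + (14523/8388608)*t^9 + (-56485/67108864)*t^10 + (202065/536870912)*t^11 + (-321725/2147483648)*t^12 + (250365/4294967296)*t^13 + (-721885/34359738368)*t^14 + (456995/68719476736)*t^15 + (-123235/68719476736)*t^16 + (66885/137438953472)*t^17 + (-60025/549755813888)*t^18 + (16807/1099511627776)*t^19"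
lemma Qt_pow5: "Qt t ^ 5 = ((1/32)*t^5) + t^6 * R5 t"
  unfolding Qt_def R5_def by algebra

definition AA :: "real \<Rightarrow> nat \<Rightarrow> real" where "AA k m = Fd m k * k^m / fact m"
definition h0 :: "real \<Rightarrow> real" where "h0 k = AA k 0"
definition h1 :: "real \<Rightarrow> real" where "h1 k = AA k 1 / 2"
definition h2 :: "real \<Rightarrow> real" where "h2 k = - AA k 1 / 8 + AA k 2 / 4"
definition h3 :: "real \<Rightarrow> real" where "h3 k = AA k 1 / 16 - AA k 2 / 8 + AA k 3 / 8"
definition h4 :: "real \<Rightarrow> real" where "h4 k = - 5 * AA k 1 / 128 + 5 * AA k 2 / 64 - 3 * AA k 3 / 32 + AA k 4 / 16"
definition h5 :: "real \<Rightarrow> real" where "h5 k = 7 * AA k 1 / 256 - 7 * AA k 2 / 128 + 9 * AA k 3 / 128 - AA k 4 / 16 + AA k 5 / 32"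
definition Pp :: "real \<Rightarrow> real \<Rightarrow> real" where
  "Pp k t = h0 k + h1 k * t + h2 k * t^2 + h3 k * t^3 + h4 k * t^4 + h5 k * t^5"
definition RR :: "real \<Rightarrow> real \<Rightarrow> real" where
  "RR k t = AA k 2 * R2 t + AA k 3 * R3 t + AA k 4 * R4 t + AA k 5 * R5 t"

lemma sum6: "(\<Sum>m<6. f m) = f 0 + f 1 + f 2 + f 3 + f (4::nat) + (f 5 :: real)"
  by (simp add: eval_nat_numeral)

lemma sumQ: "(\<Sum>m<6. AA k m * Qt t ^ m) = Pp k t + t^6 * RR k t"
  unfolding sum6 Qt_pow2 Qt_pow3 Qt_pow4 Qt_pow5 power_one_right power_0
  unfolding Pp_def RR_def h0_def h1_def h2_def h3_def h4_def h5_def Qt_def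
  by (simp add: algebra_simps)

lemma RR_tendsto: "(RR k \<longlongrightarrow> RR k 0) (at 0)"
  unfolding RR_def R2_def R3_def R4_def R5_def by (intro tendsto_intros)

lemma G_exp:
  assumes k: "\<kappa> > 0"
  shows "(\<lambda>t. Fw (\<kappa> * sqrt (1+t)) - Pp \<kappa> t) \<in> O[nhds 0](\<lambda>t. t^6)"
proof -
  have lim: "filterlim (\<lambda>t. \<kappa> * tau t) (nhds 0) (at 0)"
    using tendsto_mult[OF tendsto_const tau_tendsto, of \<kappa>] by simp
  have T: "(\<lambda>t. Fw (\<kappa> + \<kappa> * tau t) - (\<Sum>m<6. Fd m \<kappa> / fact m * (\<kappa> * tau t)^m))
      \<in> O[at 0](\<lambda>t. (\<kappa> * tau t)^6)"
    using landau_o.big.compose[OF Fw_taylor[OF k] lim] .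
  have tb: "(\<lambda>t. \<kappa> * tau t) \<in> O[at 0](\<lambda>t. t)"
    using tau_bigo k by simp
  have T6: "(\<lambda>t. (\<kappa> * tau t)^6) \<in> O[at 0](\<lambda>t. t^6)"
    using landau_o.big_power[OF tb] .
  have e1: "\<kappa> + \<kappa> * tau t = \<kappa> * sqrt (1+t)" for t unfolding tau_def by algebra
  have e2: "Fd m \<kappa> / fact m * (\<kappa> * tau t)^m = AA \<kappa> m * tau t ^ m" for m t
    unfolding AA_def by (simp add: power_mult_distrib)
  have A1: "(\<lambda>t. Fw (\<kappa> * sqrt (1+t)) - (\<Sum>m<6. AA \<kappa> m * tau t ^ m)) \<in> O[at 0](\<lambda>t. t^6)"
    using landau_o.big_trans[OF T T6] unfolding e1 e2 .
  have tO: "tau \<in> O[at 0](\<lambda>_. 1)"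
    by (rule bigoI_tendsto[where c=0]) (use tau_tendsto in auto)
  have qO: "Qt \<in> O[at 0](\<lambda>_. 1)"
    by (rule bigoI_tendsto[where c=0]) (use Qt_tendsto in auto)
  have pd: "(\<lambda>t. tau t ^ m - Qt t ^ m) \<in> O[at 0](\<lambda>t. t^6)" for m
    by (rule bigo_pow_diff[OF tau_Qt tO qO])
  have A2: "(\<lambda>t. (\<Sum>m<6. AA \<kappa> m * tau t ^ m) - (\<Sum>m<6. AA \<kappa> m * Qt t ^ m)) \<in> O[at 0](\<lambda>t. t^6)"
  proof -
    have "(\<lambda>t. \<Sum>m<6. AA \<kappa> m * (tau t ^ m - Qt t ^ m)) \<in> O[at 0](\<lambda>t. t^6)"
      by (rule big_sum_in_bigo) (use pd in simp)
    then show ?thesis by (simp add: sum_subtractf right_diff_distrib)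
  qed
  have A3: "(\<lambda>t. (\<Sum>m<6. AA \<kappa> m * Qt t ^ m) - Pp \<kappa> t) \<in> O[at 0](\<lambda>t. t^6)"
    unfolding sumQ by (simp add: bigo_mult_conv[OF RR_tendsto])
  have "(\<lambda>t. (Fw (\<kappa> * sqrt (1+t)) - (\<Sum>m<6. AA \<kappa> m * tau t ^ m))
     + ((\<Sum>m<6. AA \<kappa> m * tau t ^ m) - (\<Sum>m<6. AA \<kappa> m * Qt t ^ m))
     + ((\<Sum>m<6. AA \<kappa> m * Qt t ^ m) - Pp \<kappa> t)) \<in> O[at 0](\<lambda>t. t^6)"
    by (intro sum_in_bigo A1 A2 A3)
  then have "(\<lambda>t. Fw (\<kappa> * sqrt (1+t)) - Pp \<kappa> t) \<in> O[at 0](\<lambda>t. t^6)" by simp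
  moreover have "Fw (\<kappa> * sqrt (1+0)) - Pp \<kappa> 0 = 0"
    by (simp add: Pp_def h0_def AA_def Fd0)
  ultimately show ?thesis by (rule bigo_at_to_nhds)
qed

definition Bodd :: "real \<Rightarrow> real \<Rightarrow> real \<Rightarrow> real \<Rightarrow> real" where
  "Bodd k l Y Z = 3*h3 k*Y*Z^2 + 4*h4 k*(Y^3*Z + l^2*Y*Z^3) + h5 k*(Y^5 + 10*l^2*Y^3*Z^2 + 5*l^4*Y*Z^4)"
definition Beven :: "real \<Rightarrow> real \<Rightarrow> real \<Rightarrow> real \<Rightarrow> real" where
  "Beven k l Y Z = h3 k*Z^3 + h4 k*(6*Y^2*Z^2 + l^2*Z^4) + h5 k*(5*Y^4*Z + 10*l^2*Y^2*Z^3 + l^4*Z^5)"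

lemma odd_id0: "Pp k (l*Y + l^2*Z) - Pp k (-(l*Y) + l^2*Z)
   = 2 * (h1 k*l*Y + 2*h2 k*l^3*Y*Z + h3 k*l^3*Y^3 + l^5 * Bodd k l Y Z)"
  unfolding Pp_def Bodd_def by algebra
lemma odd_id: "(Pp k (l*Y + l^2*Z) - Pp k (-(l*Y) + l^2*Z))/2
   = h1 k*l*Y + 2*h2 k*l^3*Y*Z + h3 k*l^3*Y^3 + l^5 * Bodd k l Y Z"
  unfolding odd_id0 by simp

lemma even_id0: "Pp k (l*Y + l^2*Z) + Pp k (-(l*Y) + l^2*Z)
   = 2 * (h0 k + l^2*(h1 k*Z + h2 k*Y^2) + l^4*(h2 k*Z^2 + 3*h3 k*Y^2*Z + h4 k*Y^4) + l^6 * Beven k l Y Z)"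
  unfolding Pp_def Beven_def by algebra
lemma even_id: "(Pp k (l*Y + l^2*Z) + Pp k (-(l*Y) + l^2*Z))/2
   = h0 k + l^2*(h1 k*Z + h2 k*Y^2) + l^4*(h2 k*Z^2 + 3*h3 k*Y^2*Z + h4 k*Y^4) + l^6 * Beven k l Y Z"
  unfolding even_id0 by simp

lemma fact_vals: "fact 1 = (1::real)" "fact 2 = (2::real)" "fact 3 = (6::real)" "fact 4 = (24::real)"
  by (simp_all add: eval_nat_numeral)

lemma tgt_id:
  assumes "k \<noteq> 0"
  shows "h1 k*l*(2*y/k) + 2*h2 k*l^3*(2*y/k)*((1+y^2)/k^2) + h3 k*l^3*(2*y/k)^3
    = (Fd 1 k + (k * Fd 2 k - Fd 1 k) * l^2 / (2 * k^2)) * (l*y) + Fd 3 k * (l*y)^3 / 6"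
  using assms unfolding h1_def h2_def h3_def AA_def fact_vals
  by (simp add: field_simps; algebra)

lemma Fd1_pos:
  assumes x: "x > 0"
  shows "Fd 1 x > 0"
proof -
  have p: "x * tanh x > 0" using x by simp
  have d1: "((\<lambda>t. t * tanh t) has_real_derivative 1 * tanh x + x * (1 - tanh x ^ 2)) (at x)"
    by (auto intro!: derivative_eq_intros)
  have "((\<lambda>t. sqrt (t * tanh t)) has_real_derivative
          (inverse (sqrt (x * tanh x)) / 2) * (1 * tanh x + x * (1 - tanh x ^ 2))) (at x)"
    using DERIV_chain2[where g="\<lambda>t. t * tanh t" and x=x, OF DERIV_real_sqrt[OF p] d1] .
  then have "((\<lambda>t. sqrt (t * tanh t)) has_real_derivative
          (1 * tanh x + x * (1 - tanh x ^ 2)) * (inverse (sqrt (x * tanh x)) / 2)) (at x)"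
    by (simp add: mult.commute)
  then have d: "(Fw has_real_derivative
          (1 * tanh x + x * (1 - tanh x ^ 2)) * (inverse (sqrt (x * tanh x)) / 2)) (at x)"
    by (rule has_field_derivative_transform_within_open[where S="{0<..}"])
       (use x in \<open>auto simp: Fw_def\<close>)
  have "Fd 1 x = (1 * tanh x + x * (1 - tanh x ^ 2)) * (inverse (sqrt (x * tanh x)) / 2)"
    using DERIV_unique[OF Fd_DERIV[OF x, of 0] d[folded Fd0]] by simp
  moreover have "tanh x ^ 2 < 1"
    using tanh_real_lt_1[of x] tanh_real_pos_iff[of x] x
    by (metis abs_of_pos power_strict_mono one_power2 tanh_real_pos_iff zero_le_numeral zero_less_numeral abs_ge_zero) 
  moreover have "(1 * tanh x + x * (1 - tanh x ^ 2)) > 0"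
    using x \<open>tanh x ^ 2 < 1\<close> by (simp add: add_pos_pos)
  moreover have "inverse (sqrt (x * tanh x)) / 2 > 0" using p by simp
  ultimately show ?thesis by (metis mult_pos_pos)
qed

lemma bigo_ev_eq:
  assumes "eventually (\<lambda>x. f x = g x) F" "f \<in> O[F](h)"
  shows "g \<in> O[F](h)"
  using landau_o.big.in_cong[OF assms(1)] assms(2) by simp

lemma l22: "(\<lambda>l::real. l^2 * l^2) = (\<lambda>l. l^4)" by (auto simp: fun_eq_iff simp flip: power_add)

lemma solve_core:
  fixes y :: "real \<Rightarrow> real" and k s a1 a2 a3 a4 :: real
  assumes yt: "(y \<longlongrightarrow> s) (at 0)" and s: "s > 0" and k: "k \<noteq> 0" and a1: "a1 \<noteq> 0"
  and E: "(\<lambda>l. (a1*((1 + y l^2)/k^2) + a2*(2*y l/k)^2)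
       + l^2*(a2*((1 + y l^2)/k^2)^2 + 3*a3*(2*y l/k)^2*((1 + y l^2)/k^2) + a4*(2*y l/k)^4))
       \<in> O[at 0](\<lambda>l. l^4)"
  defines "N2c \<equiv> (a2*(1+s^2)^2 + 12*a3* s^2*(1+s^2) + 16*a4*(s^2)^2)/k^4"
  defines "dd \<equiv> (-(k^2 * N2c)) / (a1 + 4*a2)"
  shows "a1 + 4*a2 \<noteq> 0" "s^2 = - a1 / (a1 + 4*a2)"
        "(\<lambda>l. y l - s - dd*l^2/(2* s)) \<in> O[at 0](\<lambda>l. l^4)"
proof -
  define \<alpha> where "\<alpha> = a1 + 4*a2"
  define c where "c = s^2"
  define N1 where "N1 l = a1*((1 + y l^2)/k^2) + a2*(2*y l/k)^2" for l
  define N2 where "N2 l = a2*((1 + y l^2)/k^2)^2 + 3*a3*(2*y l/k)^2*((1 + y l^2)/k^2) + a4*(2*y l/k)^4" for l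
  have MO: "(\<lambda>l. N1 l + l^2 * N2 l) \<in> O[at 0](\<lambda>l. l^4)" using E unfolding N1_def N2_def .
  have N1e: "N1 l = (\<alpha> * y l^2 + a1)/k^2" for l
    unfolding N1_def \<alpha>_def using k by (simp add: field_simps power2_eq_square)
  have N2e: "N2 l = (a2*(1+y l^2)^2 + 12*a3*y l^2*(1+y l^2) + 16*a4*(y l^2)^2)/k^4" for l
    unfolding N2_def using k by (simp add: field_simps; algebra)
  have N2t: "(N2 \<longlongrightarrow> (a2*(1+s^2)^2 + 12*a3* s^2*(1+s^2) + 16*a4*(s^2)^2)/k^4) (at 0)"
    unfolding N2e by (intro tendsto_intros yt) (use k in auto)
  have Mt: "((\<lambda>l. N1 l + l^2 * N2 l) \<longlongrightarrow> (\<alpha> * s^2 + a1)/k^2 + 0^2 * ((a2*(1+s^2)^2 + 12*a3* s^2*(1+s^2) + 16*a4*(s^2)^2)/k^4)) (at 0)"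
    unfolding N1e by (intro tendsto_intros yt N2t) (use k in auto)
  have Mt0: "((\<lambda>l. N1 l + l^2 * N2 l) \<longlongrightarrow> 0) (at 0)"
    by (rule bigo_tendsto0[OF MO]) simp
  have "(\<alpha> * s^2 + a1)/k^2 + 0^2 * ((a2*(1+s^2)^2 + 12*a3* s^2*(1+s^2) + 16*a4*(s^2)^2)/k^4) = 0"
    using tendsto_unique[OF _ Mt Mt0] by simp
  then have ac: "\<alpha> * c + a1 = 0" using k by (simp add: c_def)
  then have a0: "\<alpha> \<noteq> 0" using a1 by auto
  then show "a1 + 4*a2 \<noteq> 0" by (simp add: \<alpha>_def)
  show "s^2 = - a1 / (a1 + 4*a2)" using ac a0 unfolding \<alpha>_def c_def by (simp add: field_simps)
  have lN2: "(\<lambda>l. l^2 * N2 l) \<in> O[at 0](\<lambda>l. l^2)" by (rule bigo_mult_conv[OF N2t])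
  have M2: "(\<lambda>l. N1 l + l^2 * N2 l) \<in> O[at 0](\<lambda>l. l^2)"
    by (rule landau_o.big_trans[OF MO bigo_pow_mono]) simp
  have "(\<lambda>l. (N1 l + l^2 * N2 l) - l^2 * N2 l) \<in> O[at 0](\<lambda>l. l^2)"
    by (rule sum_in_bigo(2)[OF M2 lN2])
  then have N1O: "N1 \<in> O[at 0](\<lambda>l. l^2)" by simp
  have N1c: "N1 l = (\<alpha>/k^2) * (y l^2 - c)" for l
    unfolding N1e using ac by (simp add: field_simps)
  have VO: "(\<lambda>l. y l^2 - c) \<in> O[at 0](\<lambda>l. l^2)"
    using N1O a0 k unfolding N1c by simp
  define Dq where "Dq l = (a2*(2 + y l^2 + c) + 12*a3*(1 + y l^2 + c) + 16*a4*(y l^2 + c))/k^4" for l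
  have Dqt: "(Dq \<longlongrightarrow> (a2*(2 + s^2 + c) + 12*a3*(1 + s^2 + c) + 16*a4*(s^2 + c))/k^4) (at 0)"
    unfolding Dq_def by (intro tendsto_intros yt) (use k in auto)
  have N2d: "N2 l - N2c = (y l^2 - c) * Dq l" for l
    unfolding N2e N2c_def Dq_def c_def using k by (simp add: field_simps; algebra)
  have "(\<lambda>l. (y l^2 - c) * Dq l) \<in> O[at 0](\<lambda>l. y l^2 - c)" by (rule bigo_mult_conv[OF Dqt])
  then have "(\<lambda>l. N2 l - N2c) \<in> O[at 0](\<lambda>l. l^2)"
    unfolding N2d[symmetric] using VO by (rule landau_o.big_trans)
  then have "(\<lambda>l. l^2 * (N2 l - N2c)) \<in> O[at 0](\<lambda>l. l^2 * l^2)"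
    by (rule landau_o.big.mult_left)
  then have lN2d: "(\<lambda>l. l^2 * (N2 l - N2c)) \<in> O[at 0](\<lambda>l. l^4)" unfolding l22 .
  have "(\<lambda>l. (N1 l + l^2 * N2 l) - l^2 * (N2 l - N2c)) \<in> O[at 0](\<lambda>l. l^4)"
    by (rule sum_in_bigo(2)[OF MO lN2d])
  then have "(\<lambda>l. (k^2/\<alpha>) * ((N1 l + l^2 * N2 l) - l^2 * (N2 l - N2c))) \<in> O[at 0](\<lambda>l. l^4)"
    unfolding cmult_in_bigo_iff by (rule disjI2)
  moreover have "(k^2/\<alpha>) * ((N1 l + l^2 * N2 l) - l^2 * (N2 l - N2c)) = y l^2 - c - dd * l^2" for l
    unfolding N1c dd_def \<alpha>_def[symmetric] using a0 k by (simp add: field_simps)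
  ultimately have VdO: "(\<lambda>l. y l^2 - c - dd * l^2) \<in> O[at 0](\<lambda>l. l^4)" by simp
  have evy: "eventually (\<lambda>l. y l > 0) (at 0)" using order_tendstoD(1)[OF yt s] .
  define B where "B l = 1 / (2* s*(y l + s)^2)" for l
  have Bt: "(B \<longlongrightarrow> 1 / (2* s*(s + s)^2)) (at 0)"
    unfolding B_def using s by (intro tendsto_intros yt) auto
  have V2: "(\<lambda>l. (y l^2 - c) * (y l^2 - c)) \<in> O[at 0](\<lambda>l. l^2 * l^2)"
    by (rule landau_o.big_mult[OF VO VO])
  have T0: "(\<lambda>l. ((y l^2 - c) * (y l^2 - c)) * B l) \<in> O[at 0](\<lambda>l. (y l^2 - c) * (y l^2 - c))"
    by (rule bigo_mult_conv[OF Bt])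
  have T1: "(\<lambda>l. ((y l^2 - c) * (y l^2 - c)) * B l) \<in> O[at 0](\<lambda>l. l^4)"
    using landau_o.big_trans[OF T0 V2] unfolding l22 .
  have T2: "(\<lambda>l. (y l^2 - c - dd * l^2) * (1/(2* s))) \<in> O[at 0](\<lambda>l. l^4)"
    using VdO s by simp
  have "(\<lambda>l. (y l^2 - c - dd * l^2) * (1/(2* s)) - ((y l^2 - c) * (y l^2 - c)) * B l) \<in> O[at 0](\<lambda>l. l^4)"
    by (rule sum_in_bigo(2)[OF T2 T1])
  moreover have "eventually (\<lambda>l. (y l^2 - c - dd * l^2) * (1/(2* s)) - ((y l^2 - c) * (y l^2 - c)) * B l
      = y l - s - dd*l^2/(2* s)) (at 0)"
    using evy
  proof eventually_elim
    case (elim l)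
    have p: "y l + s > 0" using elim s by simp
    have e1: "((y l^2 - s^2) * (y l^2 - s^2)) * (1 / (2 * s * (y l + s)^2))
        = ((y l - s) * (y l + s)) * ((y l - s) * (y l + s)) / (2 * s * (y l + s)^2)"
    proof -
      have "(y l^2 - s^2) * (y l^2 - s^2) = ((y l - s) * (y l + s)) * ((y l - s) * (y l + s))" by algebra
      then show ?thesis by simp
    qed
    have d1: "2 * s * (y l + s)^2 \<noteq> 0" using p s by simp
    have d2: "2 * s \<noteq> 0" using s by simp
    have e2: "((y l - s) * (y l + s)) * ((y l - s) * (y l + s)) / (2 * s * (y l + s)^2) = (y l - s)^2 / (2 * s)"
      unfolding frac_eq_eq[OF d1 d2] by algebra
    have q: "((y l^2 - s^2) * (y l^2 - s^2)) * (1 / (2 * s * (y l + s)^2)) = (y l - s)^2 / (2 * s)"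
      using e1 e2 by simp
    have f1: "(y l^2 - s^2 - dd * l^2) * (1/(2 * s)) - (y l - s)^2 / (2 * s)
        = ((y l^2 - s^2 - dd * l^2) - (y l - s)^2) / (2 * s)"
      by (simp add: diff_divide_distrib)
    have f2: "(y l^2 - s^2 - dd * l^2) - (y l - s)^2 = (2 * s) * (y l - s) - dd * l^2" by algebra
    have f3: "((2 * s) * (y l - s) - dd * l^2) / (2 * s) = y l - s - dd*l^2/(2 * s)"
      using d2 by (simp add: diff_divide_distrib)
    show ?case unfolding B_def c_def q f1 f2 f3 by (rule refl)
  qed
  ultimately show "(\<lambda>l. y l - s - dd*l^2/(2* s)) \<in> O[at 0](\<lambda>l. l^4)"
    by (rule bigo_ev_eq[rotated])
qed

lemma key_alg:
  fixes k F1 F2 F3 F4 :: real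
  assumes k: "k \<noteq> 0" and f1: "F1 \<noteq> 0" and f2: "F2 \<noteq> 0"
  defines "c \<equiv> - F1 / (k * F2)"
  defines "a2 \<equiv> - (F1 * k) / 8 + (F2 * k^2 / 2) / 4"
  defines "a3 \<equiv> (F1 * k) / 16 - (F2 * k^2 / 2) / 8 + (F3 * k^3 / 6) / 8"
  defines "a4 \<equiv> - 5 * (F1 * k) / 128 + 5 * (F2 * k^2 / 2) / 64 - 3 * (F3 * k^3 / 6) / 32 + (F4 * k^4 / 24) / 16"
  shows "c * (3/4 - F1 / (k * F2) + k / 4 * (F2 / F1 - 2 * F3 / F2) + k / 12 * (F4 * F1 / F2^2)) / k^2
     = (-(k^2 * ((a2*(1+c)^2 + 12*a3*c*(1+c) + 16*a4*c^2)/k^4))) / (F2 * k^2 / 2)"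
  using k f1 f2 unfolding c_def a2_def a3_def a4_def
  by (simp add: field_simps; algebra)

lemma key_eq:
  assumes k: "\<kappa> > 0" and h: "lam_minus \<kappa> 1 l \<xi> = lam_plus \<kappa> (-1) l \<xi>"
  shows "(Fw (absn \<kappa> 1 l \<xi>) + Fw (absn \<kappa> (-1) l \<xi>)) / 2 = Fw \<kappa>"
proof -
  define A where "A = Fw (absn \<kappa> 1 l \<xi>)"
  define B where "B = Fw (absn \<kappa> (-1) l \<xi>)"
  define m where "m = sqrt (mu0 \<kappa>)"
  have T: "tanh \<kappa> > 0" using k by simp
  have "\<i> * complex_of_real (\<kappa> + \<xi> - m * A) = \<i> * complex_of_real (- \<kappa> + \<xi> + m * B)"
    using h unfolding lam_minus_def lam_plus_def A_def B_def m_def by simp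
  then have e: "\<kappa> + \<xi> - m * A = - \<kappa> + \<xi> + m * B" by (metis complex_i_not_zero mult_cancel_left of_real_eq_iff)
  have mp: "m > 0" unfolding m_def mu0_def using k T by simp
  have p1: "m * sqrt (\<kappa> * tanh \<kappa>) = sqrt ((\<kappa> / tanh \<kappa>) * (\<kappa> * tanh \<kappa>))"
    unfolding m_def mu0_def by (rule real_sqrt_mult[symmetric])
  have p2: "(\<kappa> / tanh \<kappa>) * (\<kappa> * tanh \<kappa>) = \<kappa>^2" using T by (simp add: field_simps power2_eq_square)
  have ms: "m * sqrt (\<kappa> * tanh \<kappa>) = \<kappa>" unfolding p1 p2 using k by simp
  have Fk: "Fw \<kappa> = sqrt (\<kappa> * tanh \<kappa>)" unfolding Fw_def using k by simp
  have "m * (A + B) = m * (2 * Fw \<kappa>)" using e ms Fk by (simp add: algebra_simps)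
  then have "A + B = 2 * Fw \<kappa>" using mp by simp
  then show ?thesis unfolding A_def B_def by simp
qed

lemma om_lemma:
  fixes \<kappa> l y \<sigma> :: real
  assumes k: "\<kappa> > 0" and sg: "\<sigma>^2 = 1"
  shows "sqrt ((\<sigma> * \<kappa> + l * y)^2 + l^2) = \<kappa> * sqrt (1 + (\<sigma> * (l * (2 * y / \<kappa>)) + l^2 * ((1 + y^2) / \<kappa>^2)))"
proof -
  have "(\<sigma> * \<kappa> + l * y)^2 + l^2 = \<kappa>^2 * (1 + (\<sigma> * (l * (2 * y / \<kappa>)) + l^2 * ((1 + y^2) / \<kappa>^2)))"
    using k sg by (simp add: field_simps; algebra)
  then show ?thesis using k by (simp add: real_sqrt_mult)
qed

lemma lin_aux: "(p - q)/2 = X + e \<Longrightarrow> X = T \<Longrightarrow> (a - p - (b - q))/2 + e = (a - b)/2 - (T::real)"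
  by (simp add: field_simps)

lemma lin_aux2: "(p + q)/2 = h + X \<Longrightarrow> (a + b)/2 = h \<Longrightarrow> (-1/2) * ((a - p) + (b - q)) = (X::real)"
  by (simp add: field_simps)

theorem lemma4p7:
  fixes \<kappa> \<delta> :: real and xi :: "real \<Rightarrow> real"
  assumes "\<kappa> > 0" and "\<delta> > 0"
    and "real_analytic_on xi {-\<delta><..<\<delta>}"
    and "\<forall>l\<in>{-\<delta><..<\<delta>}. xi (-l) = - xi l"
    and "deriv xi 0 > 0"
    and "\<forall>l\<in>{-\<delta><..<\<delta>}. lam_minus \<kappa> 1 l (xi l) = lam_plus \<kappa> (-1) l (xi l)"
  shows "(\<forall>\<^sub>F l in nhds 0.
            (Fw (omega \<kappa> xi 1 l) + Fw (omega \<kappa> xi (-1) l)) / 2 = Fw \<kappa>)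
    \<and> (\<lambda>l. (Fw (omega \<kappa> xi 1 l) - Fw (omega \<kappa> xi (-1) l)) / 2
           - ((Fd 1 \<kappa> + (\<kappa> * Fd 2 \<kappa> - Fd 1 \<kappa>) * l^2 / (2 * \<kappa>^2)) * xi l
              + Fd 3 \<kappa> * (xi l)^3 / 6))
        \<in> O[at 0](\<lambda>l. l^5)
    \<and> (\<lambda>l. xi l
           - l * sqrt (- Fd 1 \<kappa> / (\<kappa> * Fd 2 \<kappa>))
               * (1 + l^2 / (2 * \<kappa>^2)
                    * (3/4 - Fd 1 \<kappa> / (\<kappa> * Fd 2 \<kappa>)
                       + \<kappa> / 4 * (Fd 2 \<kappa> / Fd 1 \<kappa> - 2 * Fd 3 \<kappa> / Fd 2 \<kappa>)
                       + \<kappa> / 12 * (Fd 4 \<kappa> * Fd 1 \<kappa> / (Fd 2 \<kappa>)^2))))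
        \<in> O[at 0](\<lambda>l. l^5)"
proof -
  have k: "\<kappa> > 0" by (rule assms(1))
  have k0: "\<kappa> \<noteq> 0" using k by simp
  have I0: "0 \<in> {-\<delta><..<\<delta>}" using assms(2) by simp
  from assms(3) I0 obtain r cc where r: "r > 0"
    and sc: "\<forall>y. \<bar>y - 0\<bar> < r \<longrightarrow> (\<lambda>n. cc n * (y - 0)^n) sums xi y"
    unfolding real_analytic_on_def by blast
  have summ: "summable (\<lambda>n. cc n * (r/2)^n)"
    using sc[rule_format, of "r/2"] r by (auto simp: sums_iff)
  have D0: "DERIV (\<lambda>x. \<Sum>n. cc n * x^n) 0 :> (\<Sum>n. diffs cc n * 0^n)"
    by (rule termdiffs_strong[OF summ]) (use r in simp)
  have Dxi: "DERIV xi 0 :> (\<Sum>n. diffs cc n * 0^n)"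
  proof (rule has_field_derivative_transform_within_open[OF D0, where S="{-r<..<r}"])
    fix x :: real assume "x \<in> {-r<..<r}"
    then have "(\<lambda>n. cc n * x^n) sums xi x" using sc by auto
    then show "(\<Sum>n. cc n * x^n) = xi x" by (rule sums_unique[symmetric])
  qed (use r in auto)
  define s where "s = deriv xi 0"
  have Ds: "DERIV xi 0 :> s" unfolding s_def using Dxi DERIV_imp_deriv by metis
  have s: "s > 0" using assms(5) s_def by simp
  have xi0: "xi 0 = 0" using assms(4) I0 by force
  define y where "y l = xi l / l" for l
  have yt: "(y \<longlongrightarrow> s) (at 0)"
    using Ds unfolding DERIV_def y_def[abs_def] by (simp add: xi0)
  have ev0: "eventually (\<lambda>l::real. l \<noteq> 0) (at 0)" by (simp add: eventually_at_filter)
  have xe: "eventually (\<lambda>l. xi l = l * y l) (at 0)"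
    using ev0 by eventually_elim (simp add: y_def)
  have evI: "eventually (\<lambda>l. l \<in> {-\<delta><..<\<delta>}) (nhds 0)"
    by (rule eventually_nhds_in_open) (use I0 in auto)
  have C1: "\<forall>\<^sub>F l in nhds 0. (Fw (omega \<kappa> xi 1 l) + Fw (omega \<kappa> xi (-1) l)) / 2 = Fw \<kappa>"
    using evI
  proof eventually_elim
    case (elim l)
    have "absn \<kappa> 1 l (xi l) = omega \<kappa> xi 1 l" "absn \<kappa> (-1) l (xi l) = omega \<kappa> xi (-1) l"
      by (simp_all add: absn_def omega_def)
    then show ?case using key_eq[OF k, of l "xi l"] assms(6) elim by simp
  qed
  have C1a: "\<forall>\<^sub>F l in at 0. (Fw (omega \<kappa> xi 1 l) + Fw (omega \<kappa> xi (-1) l)) / 2 = Fw \<kappa>"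
    using C1 by (simp add: eventually_at_filter eventually_mono)
  define Yf where "Yf l = 2 * y l / \<kappa>" for l
  define Zf where "Zf l = (1 + y l^2) / \<kappa>^2" for l
  define t1 where "t1 l = l * Yf l + l^2 * Zf l" for l
  define t2 where "t2 l = -(l * Yf l) + l^2 * Zf l" for l
  have om1: "eventually (\<lambda>l. omega \<kappa> xi 1 l = \<kappa> * sqrt (1 + t1 l)) (at 0)"
    using xe
  proof eventually_elim
    case (elim l)
    show ?case using om_lemma[OF k, of 1 l "y l"] elim
      unfolding omega_def t1_def Yf_def Zf_def by simp
  qed
  have om2: "eventually (\<lambda>l. omega \<kappa> xi (-1) l = \<kappa> * sqrt (1 + t2 l)) (at 0)"
    using xe
  proof eventually_elim
    case (elim l)
    show ?case using om_lemma[OF k, of "-1" l "y l"] elim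
      unfolding omega_def t2_def Yf_def Zf_def by simp
  qed
  have Yt: "(Yf \<longlongrightarrow> 2 * s / \<kappa>) (at 0)" unfolding Yf_def[abs_def] by (intro tendsto_intros yt)  (use k0 in simp)
  have Zt: "(Zf \<longlongrightarrow> (1 + s^2) / \<kappa>^2) (at 0)" unfolding Zf_def[abs_def] by (intro tendsto_intros yt) (use k0 in simp)
  have lt: "((\<lambda>l::real. l) \<longlongrightarrow> 0) (at 0)" by (rule tendsto_ident_at)
  have t1t: "filterlim t1 (nhds 0) (at 0)"
  proof -
    have "(t1 \<longlongrightarrow> 0 * (2 * s / \<kappa>) + 0^2 * ((1 + s^2) / \<kappa>^2)) (at 0)"
      unfolding t1_def[abs_def] by (intro tendsto_intros Yt Zt)
    then show ?thesis by simp
  qed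
  have t2t: "filterlim t2 (nhds 0) (at 0)"
  proof -
    have "(t2 \<longlongrightarrow> -(0 * (2 * s / \<kappa>)) + 0^2 * ((1 + s^2) / \<kappa>^2)) (at 0)"
      unfolding t2_def[abs_def] by (intro tendsto_intros Yt Zt)
    then show ?thesis by simp
  qed
  note G = G_exp[OF k]
  define rho1 where "rho1 l = Fw (\<kappa> * sqrt (1 + t1 l)) - Pp \<kappa> (t1 l)" for l
  define rho2 where "rho2 l = Fw (\<kappa> * sqrt (1 + t2 l)) - Pp \<kappa> (t2 l)" for l
  have r1a: "rho1 \<in> O[at 0](\<lambda>l. t1 l ^ 6)"
    unfolding rho1_def[abs_def] using landau_o.big.compose[OF G t1t] by simp
  have r2a: "rho2 \<in> O[at 0](\<lambda>l. t2 l ^ 6)"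
    unfolding rho2_def[abs_def] using landau_o.big.compose[OF G t2t] by simp
  have t16: "(\<lambda>l. t1 l ^ 6) \<in> O[at 0](\<lambda>l. l^6)"
  proof -
    have "((\<lambda>l. (Yf l + l * Zf l)^6) \<longlongrightarrow> (2 * s / \<kappa> + 0 * ((1 + s^2) / \<kappa>^2))^6) (at 0)"
      by (intro tendsto_intros Yt Zt)
    then have "(\<lambda>l. l^6 * (Yf l + l * Zf l)^6) \<in> O[at 0](\<lambda>l. l^6)"
      by (rule bigo_mult_conv)
    moreover have "(\<lambda>l. l^6 * (Yf l + l * Zf l)^6) = (\<lambda>l. t1 l ^ 6)"
      unfolding t1_def by (auto simp: fun_eq_iff power2_eq_square algebra_simps simp flip: power_mult_distrib)
    ultimately show ?thesis by simp
  qed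
  have t26: "(\<lambda>l. t2 l ^ 6) \<in> O[at 0](\<lambda>l. l^6)"
  proof -
    have "((\<lambda>l. (- Yf l + l * Zf l)^6) \<longlongrightarrow> (- (2 * s / \<kappa>) + 0 * ((1 + s^2) / \<kappa>^2))^6) (at 0)"
      by (intro tendsto_intros Yt Zt)
    then have "(\<lambda>l. l^6 * (- Yf l + l * Zf l)^6) \<in> O[at 0](\<lambda>l. l^6)"
      by (rule bigo_mult_conv)
    moreover have "(\<lambda>l. l^6 * (- Yf l + l * Zf l)^6) = (\<lambda>l. t2 l ^ 6)"
      unfolding t2_def by (auto simp: fun_eq_iff power2_eq_square algebra_simps simp flip: power_mult_distrib)
    ultimately show ?thesis by simp
  qed
  have r1: "rho1 \<in> O[at 0](\<lambda>l. l^6)" by (rule landau_o.big_trans[OF r1a t16])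
  have r2: "rho2 \<in> O[at 0](\<lambda>l. l^6)" by (rule landau_o.big_trans[OF r2a t26])
  have C2: "(\<lambda>l. (Fw (omega \<kappa> xi 1 l) - Fw (omega \<kappa> xi (-1) l)) / 2
           - ((Fd 1 \<kappa> + (\<kappa> * Fd 2 \<kappa> - Fd 1 \<kappa>) * l^2 / (2 * \<kappa>^2)) * xi l
              + Fd 3 \<kappa> * (xi l)^3 / 6)) \<in> O[at 0](\<lambda>l. l^5)"
  proof -
    have A: "(\<lambda>l. (rho1 l - rho2 l) / 2) \<in> O[at 0](\<lambda>l. l^5)"
      using landau_o.big_trans[OF sum_in_bigo(2)[OF r1 r2] bigo_pow_mono[of 5 6]] by simp
    have "((\<lambda>l. Bodd \<kappa> l (Yf l) (Zf l)) \<longlongrightarrow> Bodd \<kappa> 0 (2 * s / \<kappa>) ((1 + s^2) / \<kappa>^2)) (at 0)"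
      unfolding Bodd_def by (intro tendsto_intros Yt Zt)
    then have B: "(\<lambda>l. l^5 * Bodd \<kappa> l (Yf l) (Zf l)) \<in> O[at 0](\<lambda>l. l^5)"
      by (rule bigo_mult_conv)
    have "(\<lambda>l. (rho1 l - rho2 l) / 2 + l^5 * Bodd \<kappa> l (Yf l) (Zf l)) \<in> O[at 0](\<lambda>l. l^5)"
      by (rule sum_in_bigo(1)[OF A B])
    moreover have "eventually (\<lambda>l. (rho1 l - rho2 l) / 2 + l^5 * Bodd \<kappa> l (Yf l) (Zf l) =
       (Fw (omega \<kappa> xi 1 l) - Fw (omega \<kappa> xi (-1) l)) / 2
           - ((Fd 1 \<kappa> + (\<kappa> * Fd 2 \<kappa> - Fd 1 \<kappa>) * l^2 / (2 * \<kappa>^2)) * xi l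
              + Fd 3 \<kappa> * (xi l)^3 / 6)) (at 0)"
      using om1 om2 xe
    proof eventually_elim
      case (elim l)
      have od: "(Pp \<kappa> (t1 l) - Pp \<kappa> (t2 l)) / 2 = h1 \<kappa>*l*Yf l + 2*h2 \<kappa>*l^3*Yf l*Zf l + h3 \<kappa>*l^3*Yf l^3 + l^5 * Bodd \<kappa> l (Yf l) (Zf l)"
        unfolding t1_def t2_def by (rule odd_id)
      have tg: "h1 \<kappa>*l*Yf l + 2*h2 \<kappa>*l^3*Yf l*Zf l + h3 \<kappa>*l^3*Yf l^3
         = (Fd 1 \<kappa> + (\<kappa> * Fd 2 \<kappa> - Fd 1 \<kappa>) * l^2 / (2 * \<kappa>^2)) * (l * y l) + Fd 3 \<kappa> * (l * y l)^3 / 6"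
        unfolding Yf_def Zf_def using tgt_id[OF k0, of l "y l"] by simp
      show ?case unfolding elim rho1_def rho2_def by (rule lin_aux[OF od tg])
    qed
    ultimately show ?thesis by (rule bigo_ev_eq[rotated])
  qed
  define N1 where "N1 l = h1 \<kappa>*Zf l + h2 \<kappa>*Yf l^2" for l
  define N2 where "N2 l = h2 \<kappa>*Zf l^2 + 3*h3 \<kappa>*Yf l^2*Zf l + h4 \<kappa>*Yf l^4" for l
  have h0k: "h0 \<kappa> = Fw \<kappa>" by (simp add: h0_def AA_def Fd0)
  have E6: "eventually (\<lambda>l. (-1/2) * (rho1 l + rho2 l) = l^2 * (N1 l + l^2 * N2 l + l^4 * Beven \<kappa> l (Yf l) (Zf l))) (at 0)"
    using om1 om2 C1a
  proof eventually_elim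
    case (elim l)
    have ev: "(Pp \<kappa> (t1 l) + Pp \<kappa> (t2 l)) / 2 = h0 \<kappa> + (l^2*(h1 \<kappa>*Zf l + h2 \<kappa>*Yf l^2) + l^4*(h2 \<kappa>*Zf l^2 + 3*h3 \<kappa>*Yf l^2*Zf l + h4 \<kappa>*Yf l^4) + l^6 * Beven \<kappa> l (Yf l) (Zf l))"
      unfolding t1_def t2_def even_id by simp
    have gs: "(Fw (\<kappa> * sqrt (1 + t1 l)) + Fw (\<kappa> * sqrt (1 + t2 l))) / 2 = h0 \<kappa>"
      using elim h0k by simp
    have "(-1/2) * (rho1 l + rho2 l) = l^2*(h1 \<kappa>*Zf l + h2 \<kappa>*Yf l^2) + l^4*(h2 \<kappa>*Zf l^2 + 3*h3 \<kappa>*Yf l^2*Zf l + h4 \<kappa>*Yf l^4) + l^6 * Beven \<kappa> l (Yf l) (Zf l)"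
      unfolding rho1_def rho2_def by (rule lin_aux2[OF ev gs])
    also have "\<dots> = l^2 * (N1 l + l^2 * N2 l + l^4 * Beven \<kappa> l (Yf l) (Zf l))"
      unfolding N1_def N2_def by algebra
    finally show ?case .
  qed
  have RO: "(\<lambda>l. (-1/2) * (rho1 l + rho2 l)) \<in> O[at 0](\<lambda>l. l^6)"
    unfolding cmult_in_bigo_iff by (rule disjI2) (rule sum_in_bigo(1)[OF r1 r2])
  have "(\<lambda>l. l^2 * (N1 l + l^2 * N2 l + l^4 * Beven \<kappa> l (Yf l) (Zf l))) \<in> O[at 0](\<lambda>l. l^(2+4))"
    using bigo_ev_eq[OF E6 RO] by simp
  then have M6: "(\<lambda>l. N1 l + l^2 * N2 l + l^4 * Beven \<kappa> l (Yf l) (Zf l)) \<in> O[at 0](\<lambda>l. l^4)"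
    by (rule bigo_div_pow)
  have "((\<lambda>l. Beven \<kappa> l (Yf l) (Zf l)) \<longlongrightarrow> Beven \<kappa> 0 (2 * s / \<kappa>) ((1 + s^2) / \<kappa>^2)) (at 0)"
    unfolding Beven_def by (intro tendsto_intros Yt Zt)
  then have BE: "(\<lambda>l. l^4 * Beven \<kappa> l (Yf l) (Zf l)) \<in> O[at 0](\<lambda>l. l^4)"
    by (rule bigo_mult_conv)
  have EO: "(\<lambda>l. N1 l + l^2 * N2 l) \<in> O[at 0](\<lambda>l. l^4)"
    using sum_in_bigo(2)[OF M6 BE] by simp
  have A1: "AA \<kappa> 1 = Fd 1 \<kappa> * \<kappa>" by (simp add: AA_def)
  have A2: "AA \<kappa> 2 = Fd 2 \<kappa> * \<kappa>^2 / 2" by (simp add: AA_def fact_vals)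
  have A3: "AA \<kappa> 3 = Fd 3 \<kappa> * \<kappa>^3 / 6" by (simp add: AA_def fact_vals)
  have A4: "AA \<kappa> 4 = Fd 4 \<kappa> * \<kappa>^4 / 24" by (simp add: AA_def fact_vals)
  have F1p: "Fd 1 \<kappa> > 0" by (rule Fd1_pos[OF k])
  have h1ne: "h1 \<kappa> \<noteq> 0" unfolding h1_def A1 using F1p k by simp
  have EO': "(\<lambda>l. (h1 \<kappa>*((1 + y l^2)/\<kappa>^2) + h2 \<kappa>*(2*y l/\<kappa>)^2)
       + l^2*(h2 \<kappa>*((1 + y l^2)/\<kappa>^2)^2 + 3*h3 \<kappa>*(2*y l/\<kappa>)^2*((1 + y l^2)/\<kappa>^2) + h4 \<kappa>*(2*y l/\<kappa>)^4))
       \<in> O[at 0](\<lambda>l. l^4)"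
    using EO unfolding N1_def N2_def Yf_def Zf_def .
  note SC = solve_core[OF yt s k0 h1ne EO']
  define dd where "dd = (-(\<kappa>^2 * ((h2 \<kappa>*(1+s^2)^2 + 12*h3 \<kappa>* s^2*(1+s^2) + 16*h4 \<kappa>*(s^2)^2)/\<kappa>^4))) / (h1 \<kappa> + 4*h2 \<kappa>)"
  have YO: "(\<lambda>l. y l - s - dd*l^2/(2 * s)) \<in> O[at 0](\<lambda>l. l^4)"
    using SC(3) unfolding dd_def .
  have "(\<lambda>l. l * (y l - s - dd*l^2/(2 * s))) \<in> O[at 0](\<lambda>l. l * l^4)"
    by (rule landau_o.big.mult_left[OF YO])
  moreover have "(\<lambda>l::real. l * l^4) = (\<lambda>l. l^5)" by (auto simp: fun_eq_iff simp flip: power_Suc)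
  ultimately have LO: "(\<lambda>l. l * (y l - s - dd*l^2/(2 * s))) \<in> O[at 0](\<lambda>l. l^5)" by simp
  have hsum: "h1 \<kappa> + 4*h2 \<kappa> = Fd 2 \<kappa> * \<kappa>^2 / 2" unfolding h1_def h2_def A1 A2 by simp
  have F2ne: "Fd 2 \<kappa> \<noteq> 0" using SC(1) hsum k0 by auto
  have s2: "s^2 = - Fd 1 \<kappa> / (\<kappa> * Fd 2 \<kappa>)"
  proof -
    have "s^2 = - h1 \<kappa> / (Fd 2 \<kappa> * \<kappa>^2 / 2)" using SC(2) hsum by simp
    then show ?thesis unfolding h1_def A1 using k0 F2ne by (simp add: field_simps power2_eq_square)
  qed
  have sq: "sqrt (- Fd 1 \<kappa> / (\<kappa> * Fd 2 \<kappa>)) = s"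
    using s s2 by (intro real_sqrt_unique) auto
  have h2e: "h2 \<kappa> = - (Fd 1 \<kappa> * \<kappa>) / 8 + (Fd 2 \<kappa> * \<kappa>^2 / 2) / 4" unfolding h2_def A1 A2 ..
  have h3e: "h3 \<kappa> = (Fd 1 \<kappa> * \<kappa>) / 16 - (Fd 2 \<kappa> * \<kappa>^2 / 2) / 8 + (Fd 3 \<kappa> * \<kappa>^3 / 6) / 8"
    unfolding h3_def A1 A2 A3 ..
  have h4e: "h4 \<kappa> = - 5 * (Fd 1 \<kappa> * \<kappa>) / 128 + 5 * (Fd 2 \<kappa> * \<kappa>^2 / 2) / 64 - 3 * (Fd 3 \<kappa> * \<kappa>^3 / 6) / 32 + (Fd 4 \<kappa> * \<kappa>^4 / 24) / 16"
    unfolding h4_def A1 A2 A3 A4 ..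
  have ddK: "dd = s^2 * (3/4 - Fd 1 \<kappa> / (\<kappa> * Fd 2 \<kappa>)
                       + \<kappa> / 4 * (Fd 2 \<kappa> / Fd 1 \<kappa> - 2 * Fd 3 \<kappa> / Fd 2 \<kappa>)
                       + \<kappa> / 12 * (Fd 4 \<kappa> * Fd 1 \<kappa> / (Fd 2 \<kappa>)^2)) / \<kappa>^2"
    unfolding dd_def unfolding hsum unfolding h2e h3e h4e s2
    using key_alg[OF k0 F1p[THEN less_imp_neq, symmetric] F2ne, of "Fd 3 \<kappa>" "Fd 4 \<kappa>"] by simp
  have fin: "eventually (\<lambda>l. l * (y l - s - dd*l^2/(2 * s)) = xi l
           - l * sqrt (- Fd 1 \<kappa> / (\<kappa> * Fd 2 \<kappa>))
               * (1 + l^2 / (2 * \<kappa>^2) * (3/4 - Fd 1 \<kappa> / (\<kappa> * Fd 2 \<kappa>)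
                       + \<kappa> / 4 * (Fd 2 \<kappa> / Fd 1 \<kappa> - 2 * Fd 3 \<kappa> / Fd 2 \<kappa>)
                       + \<kappa> / 12 * (Fd 4 \<kappa> * Fd 1 \<kappa> / (Fd 2 \<kappa>)^2)))) (at 0)"
    using xe
  proof eventually_elim
    case (elim l)
    show ?case unfolding elim sq ddK using s k0 by (simp add: field_simps power2_eq_square)
  qed
  have C3: "(\<lambda>l. xi l
           - l * sqrt (- Fd 1 \<kappa> / (\<kappa> * Fd 2 \<kappa>))
               * (1 + l^2 / (2 * \<kappa>^2) * (3/4 - Fd 1 \<kappa> / (\<kappa> * Fd 2 \<kappa>)
                       + \<kappa> / 4 * (Fd 2 \<kappa> / Fd 1 \<kappa> - 2 * Fd 3 \<kappa> / Fd 2 \<kappa>)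
                       + \<kappa> / 12 * (Fd 4 \<kappa> * Fd 1 \<kappa> / (Fd 2 \<kappa>)^2)))) \<in> O[at 0](\<lambda>l. l^5)"
    by (rule bigo_ev_eq[OF fin LO])
  show ?thesis using C1 C2 C3 by blast
qed

end
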